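(* On the open subset of $\mathbb{R}^4$ with coordinates $(u_1,u_2,p_{u_1},p_{u_2})$ where $u_1\neq u_2$, equipped with the canonical Poisson bracket $\{u_1,u_2\}=\{p_{u_1},p_{u_2}\}=0$, $\{u_i,p_{u_j}\}=\delta_{ij}$, define $$a=\frac{p_{u_1}^2}{u_1-u_2}+\frac{p_{u_2}^2}{u_2-u_1}-u_1^2-u_1u_2-u_2^2,\qquad b=\frac{u_2p_{u_1}^2}{u_2-u_1}+\frac{u_1p_{u_2}^2}{u_1-u_2}+(u_1+u_2)u_1u_2,$$ (so that $p_{u_i}^2=u_i^3+au_i+b$ for $i=1,2$), and, with $\beta=\dfrac{p_{u_1}-p_{u_2}}{u_1-u_2}$, $$x_3=\beta^2-u_1-u_2,\qquad y_3=p_{u_1}+\beta\,(x_3-u_1).$$ Then these four functions satisfy $$\{a,b\}=0,\quad \{a,x_3\}=0,\quad \{a,y_3\}=0,\quad \{b,x_3\}=2y_3,\quad \{b,y_3\}=3x_3^2+a,\quad \{x_3,y_3\}=-1,$$ together with the relation $y_3^2=x_3^3+ax_3+b$. In particular, the Hamiltonian system with Hamiltonian $H=a$ is superintegrable, with first integrals $a,b,x_3,y_3$.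
   Context: The Poisson bracket is $\{f,g\}=\sum_{i=1}^2\left(\frac{\partial f}{\partial u_i}\frac{\partial g}{\partial p_{u_i}}-\frac{\partial f}{\partial p_{u_i}}\frac{\partial g}{\partial u_i}\right)$. Geometrically, $(x_3,y_3)$ is the third intersection point of the cubic $y^2=x^3+ax+b$ with the line through $(u_1,p_{u_1})$ and $(u_2,p_{u_2})$. *)

theory Defs
  imports "HOL-Analysis.Analysis"
begin

text \<open>Functions on R^4 with coordinates (u1, u2, p1, p2), where p1 = p_{u_1}, p2 = p_{u_2}.\<close>
type_synonym fn4 = "real \<Rightarrow> real \<Rightarrow> real \<Rightarrow> real \<Rightarrow> real"

definition d_u1 :: "fn4 \<Rightarrow> fn4" where
  "d_u1 f = (\<lambda>u1 u2 p1 p2. deriv (\<lambda>t. f t u2 p1 p2) u1)"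
definition d_u2 :: "fn4 \<Rightarrow> fn4" where
  "d_u2 f = (\<lambda>u1 u2 p1 p2. deriv (\<lambda>t. f u1 t p1 p2) u2)"
definition d_p1 :: "fn4 \<Rightarrow> fn4" where
  "d_p1 f = (\<lambda>u1 u2 p1 p2. deriv (\<lambda>t. f u1 u2 t p2) p1)"
definition d_p2 :: "fn4 \<Rightarrow> fn4" where
  "d_p2 f = (\<lambda>u1 u2 p1 p2. deriv (\<lambda>t. f u1 u2 p1 t) p2)"

definition poisson :: "fn4 \<Rightarrow> fn4 \<Rightarrow> fn4" where
  "poisson f g = (\<lambda>u1 u2 p1 p2.
      d_u1 f u1 u2 p1 p2 * d_p1 g u1 u2 p1 p2 - d_p1 f u1 u2 p1 p2 * d_u1 g u1 u2 p1 p2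
    + d_u2 f u1 u2 p1 p2 * d_p2 g u1 u2 p1 p2 - d_p2 f u1 u2 p1 p2 * d_u2 g u1 u2 p1 p2)"

definition coef_a :: fn4 where
  "coef_a = (\<lambda>u1 u2 p1 p2. p1^2 / (u1 - u2) + p2^2 / (u2 - u1) - u1^2 - u1*u2 - u2^2)"

definition coef_b :: fn4 where
  "coef_b = (\<lambda>u1 u2 p1 p2. u2 * p1^2 / (u2 - u1) + u1 * p2^2 / (u1 - u2) + (u1 + u2) * u1 * u2)"

definition slope :: fn4 where
  "slope = (\<lambda>u1 u2 p1 p2. (p1 - p2) / (u1 - u2))"

definition x3 :: fn4 where
  "x3 = (\<lambda>u1 u2 p1 p2. (slope u1 u2 p1 p2)^2 - u1 - u2)"

definition y3 :: fn4 where
  "y3 = (\<lambda>u1 u2 p1 p2. p1 + slope u1 u2 p1 p2 * (x3 u1 u2 p1 p2 - u1))"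

end

theory Submission
  imports Defs
begin

context fixes u1 u2 p1 p2 :: real assumes h: "u1 \<noteq> u2" begin
lemma h1: "u1 - u2 \<noteq> 0" "u2 - u1 \<noteq> 0" using h by auto
lemma h3: "u1 * u1 + u2 * u2 - u1 * (u2 * 2) \<noteq> 0"
proof -
  have "u1 * u1 + u2 * u2 - u1 * (u2 * 2) = (u1 - u2) * (u1 - u2)" by algebra
  thus ?thesis using h1 by simp
qed
lemma sq1: "(u1 - u2) * (u1 - u2) = (u1 - u2)^2" by (simp add: power2_eq_square)
lemma sq2: "(u2 - u1) * (u2 - u1) = (u1 - u2)^2" by (simp add: power2_eq_square algebra_simps)

lemma dAu1: "d_u1 coef_a u1 u2 p1 p2 = (- (slope u1 u2 p1 p2) * (p1+p2)/(u1-u2) - 2 * u1 - u2)"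
proof -
  have key: "d_u1 coef_a u1 (u1 - d) p1 p2 = (- (slope u1 (u1 - d) p1 p2) * (p1+p2)/(u1-(u1 - d)) - 2 * u1 - (u1 - d))" if dz: "d \<noteq> 0" for d
  proof -
    have z: "u1 - (u1 - d) \<noteq> 0" "u1 - d - u1 \<noteq> 0" using dz by auto
    show ?thesis
    unfolding d_u1_def coef_a_def 
    apply (rule DERIV_imp_deriv)
    apply (rule DERIV_cong)
     apply (rule derivative_eq_intros refl z)+
    apply (simp add: slope_def x3_def field_simps dz)
    apply algebra?
    done
  qed
  show ?thesis using key[of "u1 - u2"] h1 by simp
qed

lemma dAu2: "d_u2 coef_a u1 u2 p1 p2 = ((slope u1 u2 p1 p2) * (p1+p2)/(u1-u2) - u1 - 2 * u2)"
proof -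
  have key: "d_u2 coef_a u1 (u1 - d) p1 p2 = ((slope u1 (u1 - d) p1 p2) * (p1+p2)/(u1-(u1 - d)) - u1 - 2 * (u1 - d))" if dz: "d \<noteq> 0" for d
  proof -
    have z: "u1 - (u1 - d) \<noteq> 0" "u1 - d - u1 \<noteq> 0" using dz by auto
    show ?thesis
    unfolding d_u2_def coef_a_def 
    apply (rule DERIV_imp_deriv)
    apply (rule DERIV_cong)
     apply (rule derivative_eq_intros refl z)+
    apply (simp add: slope_def x3_def field_simps dz)
    apply algebra?
    done
  qed
  show ?thesis using key[of "u1 - u2"] h1 by simp
qed

lemma dAp1: "d_p1 coef_a u1 u2 p1 p2 = (2 * p1/(u1-u2))"
proof -
  have key: "d_p1 coef_a u1 (u1 - d) p1 p2 = (2 * p1/(u1-(u1 - d)))" if dz: "d \<noteq> 0" for d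
  proof -
    have z: "u1 - (u1 - d) \<noteq> 0" "u1 - d - u1 \<noteq> 0" using dz by auto
    show ?thesis
    unfolding d_p1_def coef_a_def 
    apply (rule DERIV_imp_deriv)
    apply (rule DERIV_cong)
     apply (rule derivative_eq_intros refl z)+
    apply (simp add: slope_def x3_def field_simps dz)
    apply algebra?
    done
  qed
  show ?thesis using key[of "u1 - u2"] h1 by simp
qed

lemma dAp2: "d_p2 coef_a u1 u2 p1 p2 = (- 2 * p2/(u1-u2))"
proof -
  have key: "d_p2 coef_a u1 (u1 - d) p1 p2 = (- 2 * p2/(u1-(u1 - d)))" if dz: "d \<noteq> 0" for d
  proof -
    have z: "u1 - (u1 - d) \<noteq> 0" "u1 - d - u1 \<noteq> 0" using dz by auto
    show ?thesis
    unfolding d_p2_def coef_a_def 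
    apply (rule DERIV_imp_deriv)
    apply (rule DERIV_cong)
     apply (rule derivative_eq_intros refl z)+
    apply (simp add: slope_def x3_def field_simps dz)
    apply algebra?
    done
  qed
  show ?thesis using key[of "u1 - u2"] h1 by simp
qed

lemma dBu1: "d_u1 coef_b u1 u2 p1 p2 = (u2 * p1^2/(u1-u2)^2 + p2^2/(u1-u2) - u1 * p2^2/(u1-u2)^2 + 2 * u1 * u2 + u2^2)"
proof -
  have key: "d_u1 coef_b u1 (u1 - d) p1 p2 = ((u1 - d) * p1^2/(u1-(u1 - d))^2 + p2^2/(u1-(u1 - d)) - u1 * p2^2/(u1-(u1 - d))^2 + 2 * u1 * (u1 - d) + (u1 - d)^2)" if dz: "d \<noteq> 0" for d
  proof -
    have z: "u1 - (u1 - d) \<noteq> 0" "u1 - d - u1 \<noteq> 0" using dz by auto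
    show ?thesis
    unfolding d_u1_def coef_b_def 
    apply (rule DERIV_imp_deriv)
    apply (rule DERIV_cong)
     apply (rule derivative_eq_intros refl z)+
    apply (simp add: slope_def x3_def field_simps dz)
    apply algebra?
    done
  qed
  show ?thesis using key[of "u1 - u2"] h1 by simp
qed

lemma dBu2: "d_u2 coef_b u1 u2 p1 p2 = (- (p1^2)/(u1-u2) - u2 * p1^2/(u1-u2)^2 + u1 * p2^2/(u1-u2)^2 + u1^2 + 2 * u1 * u2)"
proof -
  have key: "d_u2 coef_b u1 (u1 - d) p1 p2 = (- (p1^2)/(u1-(u1 - d)) - (u1 - d) * p1^2/(u1-(u1 - d))^2 + u1 * p2^2/(u1-(u1 - d))^2 + u1^2 + 2 * u1 * (u1 - d))" if dz: "d \<noteq> 0" for d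
  proof -
    have z: "u1 - (u1 - d) \<noteq> 0" "u1 - d - u1 \<noteq> 0" using dz by auto
    show ?thesis
    unfolding d_u2_def coef_b_def 
    apply (rule DERIV_imp_deriv)
    apply (rule DERIV_cong)
     apply (rule derivative_eq_intros refl z)+
    apply (simp add: slope_def x3_def field_simps dz)
    apply algebra?
    done
  qed
  show ?thesis using key[of "u1 - u2"] h1 by simp
qed

lemma dBp1: "d_p1 coef_b u1 u2 p1 p2 = (- 2 * u2 * p1/(u1-u2))"
proof -
  have key: "d_p1 coef_b u1 (u1 - d) p1 p2 = (- 2 * (u1 - d) * p1/(u1-(u1 - d)))" if dz: "d \<noteq> 0" for d
  proof -
    have z: "u1 - (u1 - d) \<noteq> 0" "u1 - d - u1 \<noteq> 0" using dz by auto
    show ?thesis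
    unfolding d_p1_def coef_b_def 
    apply (rule DERIV_imp_deriv)
    apply (rule DERIV_cong)
     apply (rule derivative_eq_intros refl z)+
    apply (simp add: slope_def x3_def field_simps dz)
    apply algebra?
    done
  qed
  show ?thesis using key[of "u1 - u2"] h1 by simp
qed

lemma dBp2: "d_p2 coef_b u1 u2 p1 p2 = (2 * u1 * p2/(u1-u2))"
proof -
  have key: "d_p2 coef_b u1 (u1 - d) p1 p2 = (2 * u1 * p2/(u1-(u1 - d)))" if dz: "d \<noteq> 0" for d
  proof -
    have z: "u1 - (u1 - d) \<noteq> 0" "u1 - d - u1 \<noteq> 0" using dz by auto
    show ?thesis
    unfolding d_p2_def coef_b_def 
    apply (rule DERIV_imp_deriv)
    apply (rule DERIV_cong)
     apply (rule derivative_eq_intros refl z)+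
    apply (simp add: slope_def x3_def field_simps dz)
    apply algebra?
    done
  qed
  show ?thesis using key[of "u1 - u2"] h1 by simp
qed

lemma dXu1: "d_u1 x3 u1 u2 p1 p2 = (- 2 * (slope u1 u2 p1 p2)^2/(u1-u2) - 1)"
proof -
  have key: "d_u1 x3 u1 (u1 - d) p1 p2 = (- 2 * (slope u1 (u1 - d) p1 p2)^2/(u1-(u1 - d)) - 1)" if dz: "d \<noteq> 0" for d
  proof -
    have z: "u1 - (u1 - d) \<noteq> 0" "u1 - d - u1 \<noteq> 0" using dz by auto
    show ?thesis
    unfolding d_u1_def x3_def x3_def slope_def
    apply (rule DERIV_imp_deriv)
    apply (rule DERIV_cong)
     apply (rule derivative_eq_intros refl z)+
    apply (simp add: slope_def x3_def field_simps dz)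
    apply algebra?
    done
  qed
  show ?thesis using key[of "u1 - u2"] h1 by simp
qed

lemma dXu2: "d_u2 x3 u1 u2 p1 p2 = (2 * (slope u1 u2 p1 p2)^2/(u1-u2) - 1)"
proof -
  have key: "d_u2 x3 u1 (u1 - d) p1 p2 = (2 * (slope u1 (u1 - d) p1 p2)^2/(u1-(u1 - d)) - 1)" if dz: "d \<noteq> 0" for d
  proof -
    have z: "u1 - (u1 - d) \<noteq> 0" "u1 - d - u1 \<noteq> 0" using dz by auto
    show ?thesis
    unfolding d_u2_def x3_def x3_def slope_def
    apply (rule DERIV_imp_deriv)
    apply (rule DERIV_cong)
     apply (rule derivative_eq_intros refl z)+
    apply (simp add: slope_def x3_def field_simps dz)
    apply algebra?
    done
  qed
  show ?thesis using key[of "u1 - u2"] h1 by simp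
qed

lemma dXp1: "d_p1 x3 u1 u2 p1 p2 = (2 * (slope u1 u2 p1 p2)/(u1-u2))"
proof -
  have key: "d_p1 x3 u1 (u1 - d) p1 p2 = (2 * (slope u1 (u1 - d) p1 p2)/(u1-(u1 - d)))" if dz: "d \<noteq> 0" for d
  proof -
    have z: "u1 - (u1 - d) \<noteq> 0" "u1 - d - u1 \<noteq> 0" using dz by auto
    show ?thesis
    unfolding d_p1_def x3_def x3_def slope_def
    apply (rule DERIV_imp_deriv)
    apply (rule DERIV_cong)
     apply (rule derivative_eq_intros refl z)+
    apply (simp add: slope_def x3_def field_simps dz)
    apply algebra?
    done
  qed
  show ?thesis using key[of "u1 - u2"] h1 by simp
qed

lemma dXp2: "d_p2 x3 u1 u2 p1 p2 = (- 2 * (slope u1 u2 p1 p2)/(u1-u2))"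
proof -
  have key: "d_p2 x3 u1 (u1 - d) p1 p2 = (- 2 * (slope u1 (u1 - d) p1 p2)/(u1-(u1 - d)))" if dz: "d \<noteq> 0" for d
  proof -
    have z: "u1 - (u1 - d) \<noteq> 0" "u1 - d - u1 \<noteq> 0" using dz by auto
    show ?thesis
    unfolding d_p2_def x3_def x3_def slope_def
    apply (rule DERIV_imp_deriv)
    apply (rule DERIV_cong)
     apply (rule derivative_eq_intros refl z)+
    apply (simp add: slope_def x3_def field_simps dz)
    apply algebra?
    done
  qed
  show ?thesis using key[of "u1 - u2"] h1 by simp
qed

lemma dYu1: "d_u1 y3 u1 u2 p1 p2 = ((- (slope u1 u2 p1 p2)/(u1-u2)) * ((slope u1 u2 p1 p2)^2-2 * u1-u2) + (slope u1 u2 p1 p2) * (- 2 * (slope u1 u2 p1 p2)^2/(u1-u2) - 2))"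
proof -
  have key: "d_u1 y3 u1 (u1 - d) p1 p2 = ((- (slope u1 (u1 - d) p1 p2)/(u1-(u1 - d))) * ((slope u1 (u1 - d) p1 p2)^2-2 * u1-(u1 - d)) + (slope u1 (u1 - d) p1 p2) * (- 2 * (slope u1 (u1 - d) p1 p2)^2/(u1-(u1 - d)) - 2))" if dz: "d \<noteq> 0" for d
  proof -
    have z: "u1 - (u1 - d) \<noteq> 0" "u1 - d - u1 \<noteq> 0" using dz by auto
    show ?thesis
    unfolding d_u1_def y3_def x3_def slope_def
    apply (rule DERIV_imp_deriv)
    apply (rule DERIV_cong)
     apply (rule derivative_eq_intros refl z)+
    apply (simp add: slope_def x3_def field_simps dz)
    apply algebra?
    done
  qed
  show ?thesis using key[of "u1 - u2"] h1 by simp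
qed

lemma dYu2: "d_u2 y3 u1 u2 p1 p2 = (((slope u1 u2 p1 p2)/(u1-u2)) * ((slope u1 u2 p1 p2)^2-2 * u1-u2) + (slope u1 u2 p1 p2) * (2 * (slope u1 u2 p1 p2)^2/(u1-u2) - 1))"
proof -
  have key: "d_u2 y3 u1 (u1 - d) p1 p2 = (((slope u1 (u1 - d) p1 p2)/(u1-(u1 - d))) * ((slope u1 (u1 - d) p1 p2)^2-2 * u1-(u1 - d)) + (slope u1 (u1 - d) p1 p2) * (2 * (slope u1 (u1 - d) p1 p2)^2/(u1-(u1 - d)) - 1))" if dz: "d \<noteq> 0" for d
  proof -
    have z: "u1 - (u1 - d) \<noteq> 0" "u1 - d - u1 \<noteq> 0" using dz by auto
    show ?thesis
    unfolding d_u2_def y3_def x3_def slope_def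
    apply (rule DERIV_imp_deriv)
    apply (rule DERIV_cong)
     apply (rule derivative_eq_intros refl z)+
    apply (simp add: slope_def x3_def field_simps dz)
    apply algebra?
    done
  qed
  show ?thesis using key[of "u1 - u2"] h1 by simp
qed

lemma dYp1: "d_p1 y3 u1 u2 p1 p2 = (1 + ((slope u1 u2 p1 p2)^2-2 * u1-u2)/(u1-u2) + 2 * (slope u1 u2 p1 p2)^2/(u1-u2))"
proof -
  have key: "d_p1 y3 u1 (u1 - d) p1 p2 = (1 + ((slope u1 (u1 - d) p1 p2)^2-2 * u1-(u1 - d))/(u1-(u1 - d)) + 2 * (slope u1 (u1 - d) p1 p2)^2/(u1-(u1 - d)))" if dz: "d \<noteq> 0" for d
  proof -
    have z: "u1 - (u1 - d) \<noteq> 0" "u1 - d - u1 \<noteq> 0" using dz by auto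
    show ?thesis
    unfolding d_p1_def y3_def x3_def slope_def
    apply (rule DERIV_imp_deriv)
    apply (rule DERIV_cong)
     apply (rule derivative_eq_intros refl z)+
    apply (simp add: slope_def x3_def field_simps dz)
    apply algebra?
    done
  qed
  show ?thesis using key[of "u1 - u2"] h1 by simp
qed

lemma dYp2: "d_p2 y3 u1 u2 p1 p2 = (- ((slope u1 u2 p1 p2)^2-2 * u1-u2)/(u1-u2) - 2 * (slope u1 u2 p1 p2)^2/(u1-u2))"
proof -
  have key: "d_p2 y3 u1 (u1 - d) p1 p2 = (- ((slope u1 (u1 - d) p1 p2)^2-2 * u1-(u1 - d))/(u1-(u1 - d)) - 2 * (slope u1 (u1 - d) p1 p2)^2/(u1-(u1 - d)))" if dz: "d \<noteq> 0" for d
  proof -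
    have z: "u1 - (u1 - d) \<noteq> 0" "u1 - d - u1 \<noteq> 0" using dz by auto
    show ?thesis
    unfolding d_p2_def y3_def x3_def slope_def
    apply (rule DERIV_imp_deriv)
    apply (rule DERIV_cong)
     apply (rule derivative_eq_intros refl z)+
    apply (simp add: slope_def x3_def field_simps dz)
    apply algebra?
    done
  qed
  show ?thesis using key[of "u1 - u2"] h1 by simp
qed

lemma eA: "coef_a u1 u2 p1 p2 = ((slope u1 u2 p1 p2) * (p1+p2) - (u1^2+u1 * u2+u2^2))"
proof -
  have key: "coef_a u1 (u1 - d) p1 p2 = ((slope u1 (u1 - d) p1 p2) * (p1+p2) - (u1^2+u1 * (u1 - d)+(u1 - d)^2))" if dz: "d \<noteq> 0" for d
    apply (simp add: coef_a_def slope_def field_simps dz)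
    apply algebra?
    done
  show ?thesis using key[of "u1 - u2"] h1 by simp
qed
lemma eB: "coef_b u1 u2 p1 p2 = (p1^2 - 2 * u1 * p1 * (slope u1 u2 p1 p2) + u1 * (slope u1 u2 p1 p2)^2 * (u1-u2) + u1 * u2 * (u1+u2))"
proof -
  have key: "coef_b u1 (u1 - d) p1 p2 = (p1^2 - 2 * u1 * p1 * (slope u1 (u1 - d) p1 p2) + u1 * (slope u1 (u1 - d) p1 p2)^2 * (u1-(u1 - d)) + u1 * (u1 - d) * (u1+(u1 - d)))" if dz: "d \<noteq> 0" for d
    apply (simp add: coef_b_def slope_def field_simps dz)
    apply algebra?
    done
  show ?thesis using key[of "u1 - u2"] h1 by simp
qed
lemma eX: "x3 u1 u2 p1 p2 = ((slope u1 u2 p1 p2)^2-u1-u2)"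
  by (simp add: x3_def)
lemma eY: "y3 u1 u2 p1 p2 = (p1 + (slope u1 u2 p1 p2) * ((slope u1 u2 p1 p2)^2-2 * u1-u2))"
  by (simp add: y3_def x3_def)
lemma ep: "p2 = p1 - slope u1 u2 p1 p2 * (u1-u2)"
  using h by (simp add: slope_def field_simps)
end

lemmas ds = dAu1 dAu2 dAp1 dAp2 dBu1 dBu2 dBp1 dBp2 dXu1 dXu2 dXp1 dXp2 dYu1 dYu2 dYp1 dYp2 eA eB eX eY

lemma C1:
  fixes u1 d p1 s w :: real
  assumes "w * d = 1"
  shows "(- s * (p1+(p1 - s * d)) * w - 2 * u1 - (u1 - d)) * (- 2 * (u1 - d) * p1 * w) - (2 * p1 * w) * ((u1 - d) * p1^2 * w^2 + (p1 - s * d)^2 * w - u1 * (p1 - s * d)^2 * w^2 + 2 * u1 * (u1 - d) + (u1 - d)^2) + (s * (p1+(p1 - s * d)) * w - u1 - 2 * (u1 - d)) * (2 * u1 * (p1 - s * d) * w) - (- 2 * (p1 - s * d) * w) * (- (p1^2) * w - (u1 - d) * p1^2 * w^2 + u1 * (p1 - s * d)^2 * w^2 + u1^2 + 2 * u1 * (u1 - d)) = 0"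
proof -
  have "((- s * (p1+(p1 - s * d)) * w - 2 * u1 - (u1 - d)) * (- 2 * (u1 - d) * p1 * w) - (2 * p1 * w) * ((u1 - d) * p1^2 * w^2 + (p1 - s * d)^2 * w - u1 * (p1 - s * d)^2 * w^2 + 2 * u1 * (u1 - d) + (u1 - d)^2) + (s * (p1+(p1 - s * d)) * w - u1 - 2 * (u1 - d)) * (2 * u1 * (p1 - s * d) * w) - (- 2 * (p1 - s * d) * w) * (- (p1^2) * w - (u1 - d) * p1^2 * w^2 + u1 * (p1 - s * d)^2 * w^2 + u1^2 + 2 * u1 * (u1 - d))) - (0) = (w * d - 1) * (4 * p1^3 * w^2 - 2 * d * p1^2 * s * w^2 - 8 * u1 * p1^2 * s * w^2 + 8 * u1 * d * p1 * s^2 * w^2 - 2 * u1 * d^2 * s^3 * w^2)" by algebra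
  then show ?thesis using assms by simp
qed

lemma C2:
  fixes u1 d p1 s w :: real
  assumes "w * d = 1"
  shows "(- s * (p1+(p1 - s * d)) * w - 2 * u1 - (u1 - d)) * (2 * s * w) - (2 * p1 * w) * (- 2 * s^2 * w - 1) + (s * (p1+(p1 - s * d)) * w - u1 - 2 * (u1 - d)) * (- 2 * s * w) - (- 2 * (p1 - s * d) * w) * (2 * s^2 * w - 1) = 0"
proof -
  have "((- s * (p1+(p1 - s * d)) * w - 2 * u1 - (u1 - d)) * (2 * s * w) - (2 * p1 * w) * (- 2 * s^2 * w - 1) + (s * (p1+(p1 - s * d)) * w - u1 - 2 * (u1 - d)) * (- 2 * s * w) - (- 2 * (p1 - s * d) * w) * (2 * s^2 * w - 1)) - (0) = 0" by algebra
  then show ?thesis by simp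
qed

lemma C3:
  fixes u1 d p1 s w :: real
  assumes "w * d = 1"
  shows "(- s * (p1+(p1 - s * d)) * w - 2 * u1 - (u1 - d)) * (1 + (s^2-2 * u1-(u1 - d)) * w + 2 * s^2 * w) - (2 * p1 * w) * ((- s * w) * (s^2-2 * u1-(u1 - d)) + s * (- 2 * s^2 * w - 2)) + (s * (p1+(p1 - s * d)) * w - u1 - 2 * (u1 - d)) * (- (s^2-2 * u1-(u1 - d)) * w - 2 * s^2 * w) - (- 2 * (p1 - s * d) * w) * ((s * w) * (s^2-2 * u1-(u1 - d)) + s * (2 * s^2 * w - 1)) = 0"
proof -
  have "((- s * (p1+(p1 - s * d)) * w - 2 * u1 - (u1 - d)) * (1 + (s^2-2 * u1-(u1 - d)) * w + 2 * s^2 * w) - (2 * p1 * w) * ((- s * w) * (s^2-2 * u1-(u1 - d)) + s * (- 2 * s^2 * w - 2)) + (s * (p1+(p1 - s * d)) * w - u1 - 2 * (u1 - d)) * (- (s^2-2 * u1-(u1 - d)) * w - 2 * s^2 * w) - (- 2 * (p1 - s * d) * w) * ((s * w) * (s^2-2 * u1-(u1 - d)) + s * (2 * s^2 * w - 1))) - (0) = (w * d - 1) * (-d + 3 * u1)" by algebra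
  then show ?thesis using assms by simp
qed

lemma C4:
  fixes u1 d p1 s w :: real
  assumes "w * d = 1"
  shows "((u1 - d) * p1^2 * w^2 + (p1 - s * d)^2 * w - u1 * (p1 - s * d)^2 * w^2 + 2 * u1 * (u1 - d) + (u1 - d)^2) * (2 * s * w) - (- 2 * (u1 - d) * p1 * w) * (- 2 * s^2 * w - 1) + (- (p1^2) * w - (u1 - d) * p1^2 * w^2 + u1 * (p1 - s * d)^2 * w^2 + u1^2 + 2 * u1 * (u1 - d)) * (- 2 * s * w) - (2 * u1 * (p1 - s * d) * w) * (2 * s^2 * w - 1) = 2 * (p1 + s * (s^2-2 * u1-(u1 - d)))"
proof -
  have "(((u1 - d) * p1^2 * w^2 + (p1 - s * d)^2 * w - u1 * (p1 - s * d)^2 * w^2 + 2 * u1 * (u1 - d) + (u1 - d)^2) * (2 * s * w) - (- 2 * (u1 - d) * p1 * w) * (- 2 * s^2 * w - 1) + (- (p1^2) * w - (u1 - d) * p1^2 * w^2 + u1 * (p1 - s * d)^2 * w^2 + u1^2 + 2 * u1 * (u1 - d)) * (- 2 * s * w) - (2 * u1 * (p1 - s * d) * w) * (2 * s^2 * w - 1)) - (2 * (p1 + s * (s^2-2 * u1-(u1 - d)))) = (w * d - 1) * (2 * s^3 + 2 * p1 - 4 * p1^2 * s * w^2 + 2 * d * s + 2 * d * s^3 * w - 6 * u1 * s + 8 * u1 * p1 * s^2 * w^2 - 4 * u1 * d * s^3 * w^2)" by algebra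
  then show ?thesis using assms by simp
qed

lemma C5:
  fixes u1 d p1 s w :: real
  assumes "w * d = 1"
  shows "((u1 - d) * p1^2 * w^2 + (p1 - s * d)^2 * w - u1 * (p1 - s * d)^2 * w^2 + 2 * u1 * (u1 - d) + (u1 - d)^2) * (1 + (s^2-2 * u1-(u1 - d)) * w + 2 * s^2 * w) - (- 2 * (u1 - d) * p1 * w) * ((- s * w) * (s^2-2 * u1-(u1 - d)) + s * (- 2 * s^2 * w - 2)) + (- (p1^2) * w - (u1 - d) * p1^2 * w^2 + u1 * (p1 - s * d)^2 * w^2 + u1^2 + 2 * u1 * (u1 - d)) * (- (s^2-2 * u1-(u1 - d)) * w - 2 * s^2 * w) - (2 * u1 * (p1 - s * d) * w) * ((s * w) * (s^2-2 * u1-(u1 - d)) + s * (2 * s^2 * w - 1)) = 3 * (s^2-u1-(u1 - d))^2 + (s * (p1+(p1 - s * d)) - (u1^2+u1 * (u1 - d)+(u1 - d)^2))"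
proof -
  have "(((u1 - d) * p1^2 * w^2 + (p1 - s * d)^2 * w - u1 * (p1 - s * d)^2 * w^2 + 2 * u1 * (u1 - d) + (u1 - d)^2) * (1 + (s^2-2 * u1-(u1 - d)) * w + 2 * s^2 * w) - (- 2 * (u1 - d) * p1 * w) * ((- s * w) * (s^2-2 * u1-(u1 - d)) + s * (- 2 * s^2 * w - 2)) + (- (p1^2) * w - (u1 - d) * p1^2 * w^2 + u1 * (p1 - s * d)^2 * w^2 + u1^2 + 2 * u1 * (u1 - d)) * (- (s^2-2 * u1-(u1 - d)) * w - 2 * s^2 * w) - (2 * u1 * (p1 - s * d) * w) * ((s * w) * (s^2-2 * u1-(u1 - d)) + s * (2 * s^2 * w - 1))) - (3 * (s^2-u1-(u1 - d))^2 + (s * (p1+(p1 - s * d)) - (u1^2+u1 * (u1 - d)+(u1 - d)^2))) = (w * d - 1) * (3 * s^4 + 2 * p1 * s - p1^2 * w - 6 * p1^2 * s^2 * w^2 + 5 * d * s^2 + 3 * d * s^4 * w - 2 * d * p1^2 * w^2 + d^2 + d^2 * s^2 * w - 12 * u1 * s^2 + 2 * u1 * p1 * s * w + 12 * u1 * p1 * s^3 * w^2 + 6 * u1 * p1^2 * w^2 - 5 * u1 * d - 4 * u1 * d * s^2 * w - 6 * u1 * d * s^4 * w^2 + 4 * u1 * d * p1 * s * w^2 - 2 * u1 * d^2 * s^2 * w^2 + 6 * u1^2 - 12 * u1^2 * p1 * s * w^2 + 6 * u1^2 * d * s^2 * w^2)" by algebra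
  then show ?thesis using assms by simp
qed

lemma C6:
  fixes u1 d p1 s w :: real
  assumes "w * d = 1"
  shows "(- 2 * s^2 * w - 1) * (1 + (s^2-2 * u1-(u1 - d)) * w + 2 * s^2 * w) - (2 * s * w) * ((- s * w) * (s^2-2 * u1-(u1 - d)) + s * (- 2 * s^2 * w - 2)) + (2 * s^2 * w - 1) * (- (s^2-2 * u1-(u1 - d)) * w - 2 * s^2 * w) - (- 2 * s * w) * ((s * w) * (s^2-2 * u1-(u1 - d)) + s * (2 * s^2 * w - 1)) = -1"
proof -
  have "((- 2 * s^2 * w - 1) * (1 + (s^2-2 * u1-(u1 - d)) * w + 2 * s^2 * w) - (2 * s * w) * ((- s * w) * (s^2-2 * u1-(u1 - d)) + s * (- 2 * s^2 * w - 2)) + (2 * s^2 * w - 1) * (- (s^2-2 * u1-(u1 - d)) * w - 2 * s^2 * w) - (- 2 * s * w) * ((s * w) * (s^2-2 * u1-(u1 - d)) + s * (2 * s^2 * w - 1))) - (-1) = 0" by algebra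
  then show ?thesis by simp
qed

lemma C7:
  fixes u1 d p1 s w :: real
  assumes "w * d = 1"
  shows "(p1 + s * (s^2-2 * u1-(u1 - d)))^2 = (s^2-u1-(u1 - d))^3 + (s * (p1+(p1 - s * d)) - (u1^2+u1 * (u1 - d)+(u1 - d)^2)) * (s^2-u1-(u1 - d)) + (p1^2 - 2 * u1 * p1 * s + u1 * s^2 * d + u1 * (u1 - d) * (u1+(u1 - d)))"
proof -
  have "((p1 + s * (s^2-2 * u1-(u1 - d)))^2) - ((s^2-u1-(u1 - d))^3 + (s * (p1+(p1 - s * d)) - (u1^2+u1 * (u1 - d)+(u1 - d)^2)) * (s^2-u1-(u1 - d)) + (p1^2 - 2 * u1 * p1 * s + u1 * s^2 * d + u1 * (u1 - d) * (u1+(u1 - d)))) = 0" by algebra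
  then show ?thesis by simp
qed

theorem proposition2:
  fixes u1 u2 p1 p2 :: real
  assumes h: "u1 \<noteq> u2"
  shows "poisson coef_a coef_b u1 u2 p1 p2 = 0
       \<and> poisson coef_a x3 u1 u2 p1 p2 = 0
       \<and> poisson coef_a y3 u1 u2 p1 p2 = 0
       \<and> poisson coef_b x3 u1 u2 p1 p2 = 2 * y3 u1 u2 p1 p2
       \<and> poisson coef_b y3 u1 u2 p1 p2 = 3 * (x3 u1 u2 p1 p2)^2 + coef_a u1 u2 p1 p2
       \<and> poisson x3 y3 u1 u2 p1 p2 = -1
       \<and> (y3 u1 u2 p1 p2)^2 = (x3 u1 u2 p1 p2)^3 + coef_a u1 u2 p1 p2 * x3 u1 u2 p1 p2
                                + coef_b u1 u2 p1 p2"
proof -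
  define s where "s = slope u1 u2 p1 p2"
  define d where "d = u1 - u2"
  define w where "w = 1 / d"
  have r1: "x / d = x * w" for x using w_def by simp
  have r2: "x / d^2 = x * w^2" for x using w_def by (simp add: power_one_over)
  have p: "p2 = p1 - s * d" using ep[OF h] s_def d_def by simp
  have u: "u2 = u1 - d" using d_def by simp
  have wd: "w * d = 1" using h d_def w_def by simp
  show ?thesis
    unfolding poisson_def ds[OF h]
    unfolding s_def[symmetric]
    unfolding d_def[symmetric]
    unfolding r2 r1
    unfolding p u
    using C1[OF wd] C2[OF wd] C3[OF wd] C4[OF wd] C5[OF wd] C6[OF wd] C7[OF wd] by blast
qed

end
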